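(* Let $T>0$, $\alpha\in(0,1)$ and $2\le p<\infty$. Let $\varphi$ be a continuous bounded function on $[0,T]$ into $\mathbb{R}$. Then, for $t\in(0,T)$, $$ {}^{\mathcal{ABC}}\mathcal{D}^{\alpha}_{t}\bigl[\Phi_p(\varphi(t))\bigr]\cdot \varphi(t)\;\ge\;\frac{p-1}{p}\,{}^{\mathcal{ABC}}\mathcal{D}^{\alpha}_{t}\bigl(\Phi_p(\varphi(t))\,\varphi(t)\bigr).$$
   Context: $\Phi_p:\mathbb{R}\to\mathbb{R}$ is $\Phi_p(w)=|w|^{p-2}w$. The Mittag-Leffler function is $E_{\alpha,\beta}(\omega)=\sum_{k\ge0}\omega^k/\Gamma(\alpha k+\beta)$, $E_\alpha=E_{\alpha,1}$. Set $B(\alpha)=(1-\alpha)+\frac{\alpha}{\Gamma(\alpha)}$ and $\gamma=\frac{\alpha}{1-\alpha}$. For $f\in H^1(0,T)$ and $t\in(0,T)$, the Atangana–Baleanu–Caputo derivative with base point $0$ is ${}^{\mathcal{ABC}}\mathcal{D}^{\alpha}_{t}f(t)=\frac{B(\alpha)}{1-\alpha}\int_0^t f'(y)\,E_\alpha[-\gamma(t-y)^\alpha]\,dy$ (the functions to which this derivative is applied are assumed to be such that it is defined, i.e. in $H^1(0,T)$). *)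

theory Defs
  imports "HOL-Analysis.Analysis"
begin

definition Phi_p :: "real \<Rightarrow> real \<Rightarrow> real" where
  "Phi_p p w = \<bar>w\<bar> powr (p - 2) * w"

definition mittag_leffler :: "real \<Rightarrow> real \<Rightarrow> real \<Rightarrow> real" where
  "mittag_leffler a b z = (\<Sum>k. z ^ k / Gamma (a * real k + b))"

definition B_norm :: "real \<Rightarrow> real" where
  "B_norm a = (1 - a) + a / Gamma a"

definition gamma_par :: "real \<Rightarrow> real" where
  "gamma_par a = a / (1 - a)"

text \<open>g is the (weak) derivative of f in H^1(0,T): g is square integrable on (0,T)
  and f is (the continuous representative) f(t) = f(0) + int_0^t g.\<close>
definition H1_deriv :: "real \<Rightarrow> (real \<Rightarrow> real) \<Rightarrow> (real \<Rightarrow> real) \<Rightarrow> bool" where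
  "H1_deriv T f g \<longleftrightarrow> g absolutely_integrable_on {0..T} \<and>
     (\<lambda>x. (g x)\<^sup>2) integrable_on {0..T} \<and>
     (\<forall>t\<in>{0..T}. f t = f 0 + integral {0..t} g)"

definition in_H1 :: "real \<Rightarrow> (real \<Rightarrow> real) \<Rightarrow> bool" where
  "in_H1 T f \<longleftrightarrow> (\<exists>g. H1_deriv T f g)"

text \<open>ABC derivative with base point 0 (the value does not depend on the a.e. choice of f').\<close>
definition ABC_deriv :: "real \<Rightarrow> real \<Rightarrow> (real \<Rightarrow> real) \<Rightarrow> real \<Rightarrow> real" where
  "ABC_deriv T a f t =
     (let g = (SOME g. H1_deriv T f g) in
      B_norm a / (1 - a) *
        integral {0..t} (\<lambda>y. g y * mittag_leffler a 1 (- gamma_par a * (t - y) powr a)))"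

end

theory Submission
  imports Defs
begin


definition dd :: "real \<Rightarrow> nat \<Rightarrow> nat \<Rightarrow> real" where
  "dd a n k = (\<Prod>j=1..n. (a * real k + real j) / (real k + real j))"

definition gg :: "real \<Rightarrow> nat \<Rightarrow> real \<Rightarrow> real" where
  "gg a n y = (\<Sum>k. (- y) ^ k * dd a n k / fact k)"

lemma dd_pos: "0 < a \<Longrightarrow> 0 < dd a n k"
  unfolding dd_def by (intro prod_pos) (auto intro!: divide_pos_pos add_nonneg_pos)

lemma dd_le1: "0 < a \<Longrightarrow> a \<le> 1 \<Longrightarrow> dd a n k \<le> 1"
  unfolding dd_def
proof (intro prod_le_1 conjI)
  fix j assume "0 < a" "a \<le> 1" "j \<in> {1..n}"
  then show "0 \<le> (a * real k + real j) / (real k + real j)" by auto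
  have "a * real k \<le> real k" using mult_right_mono[of a 1 "real k"] \<open>a \<le> 1\<close> by simp
  then show "(a * real k + real j) / (real k + real j) \<le> 1"
    using \<open>j \<in> {1..n}\<close> by (auto simp: divide_le_eq_1)
qed

lemma dd_Suc: "dd a (Suc n) k = dd a n k * (a + (1 - a) * (real (Suc n) / (real k + real (Suc n))))"
proof -
  have "dd a (Suc n) k = dd a n k * ((a * real k + real (Suc n)) / (real k + real (Suc n)))"
    unfolding dd_def by (simp add: prod.nat_ivl_Suc')
  also have "(a * real k + real (Suc n)) / (real k + real (Suc n)) = a + (1 - a) * (real (Suc n) / (real k + real (Suc n)))"
    by (simp add: field_simps)
  finally show ?thesis .
qed

lemma dd_0 [simp]: "dd a 0 k = 1" by (simp add: dd_def)

lemma summable_bounded_exp: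
  fixes c :: "nat \<Rightarrow> real" and y :: real
  assumes "\<And>k. \<bar>c k\<bar> \<le> 1"
  shows "summable (\<lambda>k. (- y) ^ k * c k / fact k)"
proof (rule summable_comparison_test')
  show "summable (\<lambda>k. \<bar>y\<bar> ^ k / fact k)" using summable_exp[of "\<bar>y\<bar>"] by (simp add: divide_inverse mult.commute)
  show "norm ((- y) ^ n * c n / fact n) \<le> \<bar>y\<bar> ^ n / fact n" for n
    using assms by (auto simp: abs_mult power_abs intro!: divide_right_mono mult_left_le)
qed

lemma gg_0: "gg a 0 y = exp (- y)"
  unfolding gg_def exp_def by (simp add: divide_inverse ac_simps)

lemma partial_exp_le: "(\<Sum>k<N. \<bar>x\<bar> ^ k / fact k) \<le> exp \<bar>x::real\<bar>"
proof -
  have s: "summable (\<lambda>k. \<bar>x\<bar> ^ k / fact k)"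
    using summable_exp[of "\<bar>x\<bar>"] by (simp add: divide_inverse mult.commute)
  have "(\<Sum>k<N. \<bar>x\<bar> ^ k / fact k) \<le> (\<Sum>k. \<bar>x\<bar> ^ k / fact k)"
    by (rule sum_le_suminf[OF s]) auto
  also have "\<dots> = exp \<bar>x\<bar>" by (simp add: exp_def divide_inverse mult.commute)
  finally show ?thesis .
qed

lemma has_integral_pow01: "((\<lambda>u::real. u ^ m) has_integral (1 / (real m + 1))) {0..1}"
proof -
  have "((\<lambda>u::real. u ^ m) has_integral ((\<lambda>u. u ^ Suc m / (real m + 1)) 1 - (\<lambda>u. u ^ Suc m / (real m + 1)) 0)) {0..1}"
  proof (rule fundamental_theorem_of_calculus)
    fix x :: real
    have d: "((\<lambda>u. u ^ Suc m / (real m + 1)) has_real_derivative real (Suc m) * x ^ (Suc m - Suc 0) / (real m + 1)) (at x)"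
      by (rule DERIV_cdivide[OF DERIV_pow])
    have e: "real (Suc m) * x ^ (Suc m - Suc 0) / (real m + 1) = x ^ m" by (simp add: add.commute)
    have "((\<lambda>u. u ^ Suc m / (real m + 1)) has_real_derivative x ^ m) (at x)"
      using d unfolding e .
    then show "((\<lambda>u. u ^ Suc m / (real m + 1)) has_vector_derivative x ^ m) (at x within {0..1})"
      by (simp add: has_real_derivative_iff_has_vector_derivative has_vector_derivative_at_within)
  qed simp
  then show ?thesis by simp
qed

lemma integral_series_lemma:
  fixes c :: "nat \<Rightarrow> real" and y :: real
  assumes c: "\<And>k. \<bar>c k\<bar> \<le> 1" and j: "j \<ge> 1"
  shows "((\<lambda>u. real j * u ^ (j - 1) * (\<Sum>k. (- (u * y)) ^ k * c k / fact k)) has_integral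
          (\<Sum>k. (- y) ^ k * c k / fact k * (real j / (real k + real j)))) {0..1}"
proof (rule has_integral_dominated_convergence)
  define f where "f N u = real j * u ^ (j - 1) * (\<Sum>k<N. (- (u * y)) ^ k * c k / fact k)" for N u
  define Y where "Y N = (\<Sum>k<N. (- y) ^ k * c k / fact k * (real j / (real k + real j)))" for N
  show "(f N has_integral Y N) {0..1}" for N
  proof -
    have pw: "(- (u * y)) ^ k = u ^ k * (- y) ^ k" for u k by (metis mult_minus_right power_mult_distrib)
    have eq: "f N u = (\<Sum>k<N. ((- y) ^ k * c k / fact k * real j) * u ^ (j - 1 + k))" for u
      unfolding f_def by (simp add: sum_distrib_left power_add pw algebra_simps)
    have "((\<lambda>u. \<Sum>k<N. ((- y) ^ k * c k / fact k * real j) * u ^ (j - 1 + k)) has_integral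
          (\<Sum>k<N. ((- y) ^ k * c k / fact k * real j) * (1 / (real (j - 1 + k) + 1)))) {0..1}"
      by (intro has_integral_sum has_integral_mult_right has_integral_pow01) auto
    moreover have "real (j - 1 + k) + 1 = real k + real j" for k using j by simp
    ultimately show ?thesis unfolding eq[abs_def] Y_def by (simp add: add.commute)
  qed
  show "(\<lambda>u::real. real j * exp \<bar>y\<bar>) integrable_on {0..1}"
    by (rule integrable_continuous_interval) (intro continuous_intros)
  show "\<forall>u\<in>{0..1}. norm (f N u) \<le> real j * exp \<bar>y\<bar>" for N
  proof
    fix u :: real assume u: "u \<in> {0..1}"
    have "\<bar>\<Sum>k<N. (- (u * y)) ^ k * c k / fact k\<bar> \<le> (\<Sum>k<N. \<bar>u * y\<bar> ^ k / fact k)"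
      by (rule order_trans[OF sum_abs]) (auto intro!: sum_mono divide_right_mono mult_left_le simp: abs_mult power_abs c)
    also have "\<dots> \<le> exp \<bar>u * y\<bar>" by (rule partial_exp_le)
    also have "\<dots> \<le> exp \<bar>y\<bar>" using u by (auto simp: abs_mult intro!: mult_left_le_one_le)
    finally have A: "\<bar>\<Sum>k<N. (- (u * y)) ^ k * c k / fact k\<bar> \<le> exp \<bar>y\<bar>" .
    have B: "\<bar>u ^ (j - 1)\<bar> \<le> 1" using u by (auto simp: power_le_one)
    have "norm (f N u) = real j * \<bar>u ^ (j - 1)\<bar> * \<bar>\<Sum>k<N. (- (u * y)) ^ k * c k / fact k\<bar>"
      unfolding f_def by (simp add: abs_mult)
    also have "\<dots> \<le> real j * 1 * exp \<bar>y\<bar>"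
      using A B by (intro mult_mono mult_left_mono) auto
    finally show "norm (f N u) \<le> real j * exp \<bar>y\<bar>" by simp
  qed
  show "\<forall>u\<in>{0..1}. (\<lambda>N. f N u) \<longlonglongrightarrow> real j * u ^ (j - 1) * (\<Sum>k. (- (u * y)) ^ k * c k / fact k)"
    unfolding f_def by (intro ballI tendsto_mult_left summable_LIMSEQ summable_bounded_exp c)
  have "summable (\<lambda>k. (- y) ^ k * (c k * (real j / (real k + real j))) / fact k)"
  proof (rule summable_bounded_exp)
    fix k
    have h: "0 \<le> real j / (real k + real j)" "real j / (real k + real j) \<le> 1" using j by auto
    show "\<bar>c k * (real j / (real k + real j))\<bar> \<le> 1"
      using mult_le_one[OF c[of k] h(1) h(2)] h by (simp add: abs_mult)
  qed
  then show "Y \<longlonglongrightarrow> (\<Sum>k. (- y) ^ k * c k / fact k * (real j / (real k + real j)))"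
    unfolding Y_def by (intro summable_LIMSEQ) (simp add: algebra_simps)
qed

lemma gg_has_integral:
  assumes "0 < a" "a \<le> 1"
  shows "((\<lambda>u. real (Suc n) * u ^ n * gg a n (u * y)) has_integral
          (\<Sum>k. (- y) ^ k * dd a n k / fact k * (real (Suc n) / (real k + real (Suc n))))) {0..1}"
  using integral_series_lemma[of "dd a n" "Suc n" y] dd_pos[OF assms(1)] dd_le1[OF assms]
  unfolding gg_def by (simp add: abs_of_pos less_imp_le)

lemma aux_distr: "P * (D * (a + b * R)) / F = a * (P * D / F) + b * (P * D / F * (R::real))"
  by (simp add: divide_inverse algebra_simps)

lemma gg_Suc:
  assumes "0 < a" "a \<le> 1"
  shows "gg a (Suc n) y = a * gg a n y + (1 - a) * integral {0..1} (\<lambda>u. real (Suc n) * u ^ n * gg a n (u * y))"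
proof -
  have c1: "\<bar>dd a n k\<bar> \<le> 1" for k using dd_pos[OF assms(1)] dd_le1[OF assms] by (simp add: abs_of_pos less_imp_le)
  have c2: "\<bar>dd a n k * (real (Suc n) / (real k + real (Suc n)))\<bar> \<le> 1" for k
  proof -
    have h: "0 \<le> real (Suc n) / (real k + real (Suc n))" "real (Suc n) / (real k + real (Suc n)) \<le> 1" by auto
    show ?thesis using mult_le_one[OF c1[of k] h(1) h(2)] h by (simp add: abs_mult)
  qed
  have s1: "summable (\<lambda>k. (- y) ^ k * dd a n k / fact k)" by (rule summable_bounded_exp[OF c1])
  have s2: "summable (\<lambda>k. (- y) ^ k * dd a n k / fact k * (real (Suc n) / (real k + real (Suc n))))"
  proof -
    have "summable (\<lambda>k. (- y) ^ k * (dd a n k * (real (Suc n) / (real k + real (Suc n)))) / fact k)"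
      by (rule summable_bounded_exp, rule c2)
    moreover have "(\<lambda>k. (- y) ^ k * (dd a n k * (real (Suc n) / (real k + real (Suc n)))) / fact k) =
       (\<lambda>k. (- y) ^ k * dd a n k / fact k * (real (Suc n) / (real k + real (Suc n))))"
      by (simp add: fun_eq_iff mult.commute mult.left_commute mult.assoc)
    ultimately show ?thesis by simp
  qed
  have "gg a (Suc n) y = (\<Sum>k. a * ((- y) ^ k * dd a n k / fact k) +
          (1 - a) * ((- y) ^ k * dd a n k / fact k * (real (Suc n) / (real k + real (Suc n)))))"
    unfolding gg_def dd_Suc by (rule suminf_cong) (rule aux_distr)
  also have "\<dots> = a * (\<Sum>k. (- y) ^ k * dd a n k / fact k) +
          (1 - a) * (\<Sum>k. (- y) ^ k * dd a n k / fact k * (real (Suc n) / (real k + real (Suc n))))"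
    by (simp only: suminf_add[OF summable_mult[OF s1] summable_mult[OF s2], symmetric]
        suminf_mult[OF s1] suminf_mult[OF s2])
  also have "\<dots> = a * gg a n y + (1 - a) * integral {0..1} (\<lambda>u. real (Suc n) * u ^ n * gg a n (u * y))"
    using integral_unique[OF gg_has_integral[OF assms, of n y]] unfolding gg_def by simp
  finally show ?thesis .
qed

lemma gg_prop:
  assumes "0 < a" "a \<le> 1"
  shows "(\<forall>y\<ge>0. 0 \<le> gg a n y) \<and> (\<forall>y1 y2. 0 \<le> y1 \<longrightarrow> y1 \<le> y2 \<longrightarrow> gg a n y2 \<le> gg a n y1)"
proof (induction n)
  case 0
  then show ?case by (simp add: gg_0)
next
  case (Suc n)
  have int: "(\<lambda>u. real (Suc n) * u ^ n * gg a n (u * y)) integrable_on {0..1}" for y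
    using gg_has_integral[OF assms, of n y] by blast
  show ?case
  proof (intro conjI allI impI)
    fix y :: real assume y: "0 \<le> y"
    have "0 \<le> integral {0..1} (\<lambda>u. real (Suc n) * u ^ n * gg a n (u * y))"
      using Suc.IH y by (intro integral_nonneg int) auto
    then show "0 \<le> gg a (Suc n) y"
      unfolding gg_Suc[OF assms] using Suc.IH y assms by auto
  next
    fix y1 y2 :: real assume y: "0 \<le> y1" "y1 \<le> y2"
    have "integral {0..1} (\<lambda>u. real (Suc n) * u ^ n * gg a n (u * y2))
          \<le> integral {0..1} (\<lambda>u. real (Suc n) * u ^ n * gg a n (u * y1))"
    proof (intro integral_le int)
      fix u :: real assume u: "u \<in> {0..1}"
      have "u * y1 \<le> u * y2" "0 \<le> u * y1" using u y by (auto intro: mult_left_mono)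
      then have "gg a n (u * y2) \<le> gg a n (u * y1)"
        using Suc.IH by blast
      then show "real (Suc n) * u ^ n * gg a n (u * y2) \<le> real (Suc n) * u ^ n * gg a n (u * y1)"
        using u by (intro mult_left_mono) auto
    qed
    moreover have "gg a n y2 \<le> gg a n y1" using Suc.IH y by auto
    ultimately show "gg a (Suc n) y2 \<le> gg a (Suc n) y1"
      unfolding gg_Suc[OF assms] using assms by (intro add_mono mult_left_mono) auto
  qed
qed

definition cc :: "real \<Rightarrow> nat \<Rightarrow> nat \<Rightarrow> real" where
  "cc a n k = real (Suc n) powr ((1 - a) * real k) * dd a (Suc n) k"

lemma poch_Suc_prod: "pochhammer (z::real) (Suc m) = z * (\<Prod>j=1..m. z + real j)"
proof (induction m)
  case 0 then show ?case by simp
next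
  case (Suc m)
  have "pochhammer z (Suc (Suc m)) = (z + real (Suc m)) * pochhammer z (Suc m)"
    by (rule pochhammer_rec')
  also have "\<dots> = z * (\<Prod>j=1..Suc m. z + real j)"
  proof -
    have "(\<Prod>j=1..Suc m. z + real j) = (\<Prod>j=1..m. z + real j) * (z + real (Suc m))"
      by (rule prod.cl_ivl_Suc[THEN trans]) simp
    then show ?thesis unfolding Suc.IH by simp
  qed
  finally show ?case .
qed

lemma ratio_aux: "F \<noteq> 0 \<Longrightarrow> E2 \<noteq> 0 \<Longrightarrow> P1 \<noteq> 0 \<Longrightarrow> P2 \<noteq> 0 \<Longrightarrow>
   (F * E1 / P1) / (F * E2 / P2) = (E1 / E2) * (P2 / (P1::real))"
  by (simp add: field_simps)

lemma cc_Gamma_series: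
  assumes "0 < a" "k \<ge> 1"
  shows "Gamma_series (real k) (Suc n) / Gamma_series (a * real k) (Suc n) = a * cc a n k"
proof -
  define m where "m = Suc n"
  have m: "real m > 0" by (simp add: m_def)
  have k: "real k > 0" using assms by simp
  have p1: "pochhammer (real k) (m + 1) > 0" using k by (intro pochhammer_pos) 
  have p2: "pochhammer (a * real k) (m + 1) > 0" using k assms by (intro pochhammer_pos) simp
  have "Gamma_series (real k) m / Gamma_series (a * real k) m =
        (exp (real k * ln (real m)) / exp (a * real k * ln (real m))) *
        (pochhammer (a * real k) (m + 1) / pochhammer (real k) (m + 1))"
    unfolding Gamma_series_def of_real_eq_id id_def
    by (rule ratio_aux) (use p1 p2 in auto)
  also have "exp (real k * ln (real m)) / exp (a * real k * ln (real m)) = exp ((1 - a) * real k * ln (real m))"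
    by (simp add: exp_diff[symmetric] algebra_simps)
  also have "\<dots> = real m powr ((1 - a) * real k)"
    using m by (simp add: powr_def)
  also have "pochhammer (a * real k) (m + 1) / pochhammer (real k) (m + 1) =
             (a * real k / real k) * (\<Prod>j=1..m. (a * real k + real j) / (real k + real j))"
    by (simp only: Suc_eq_plus1[symmetric] poch_Suc_prod prod_dividef times_divide_times_eq)
  also have "a * real k / real k = a" using k by simp
  finally have "Gamma_series (real k) m / Gamma_series (a * real k) m =
      real m powr ((1 - a) * real k) * (a * (\<Prod>j=1..m. (a * real k + real j) / (real k + real j)))" .
  then show ?thesis unfolding m_def cc_def dd_def by (simp only: ac_simps)
qed

lemma not_nonpos_Int: "(x::real) > 0 \<Longrightarrow> x \<notin> \<int>\<^sub>\<le>\<^sub>0"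
  using nonpos_Ints_nonpos by force

lemma Gamma_ratio_fact:
  assumes "0 < a" "k \<ge> 1"
  shows "Gamma (real k) / Gamma (a * real k) / a = fact k / Gamma (a * real k + 1)"
proof -
  have k: "real k > 0" using assms by simp
  have ak: "a * real k > 0" using assms k by simp
  have e1: "Gamma (a * real k + 1) = a * real k * Gamma (a * real k)"
    using Gamma_plus1[OF not_nonpos_Int[OF ak]] .
  have "fact k = Gamma (1 + real k)" by (rule Gamma_fact[symmetric])
  also have "\<dots> = Gamma (real k + 1)" by (simp only: add.commute)
  also have "\<dots> = real k * Gamma (real k)" using Gamma_plus1[OF not_nonpos_Int[OF k]] .
  finally have e2: "fact k = real k * Gamma (real k)" .
  have g: "Gamma (a * real k) > 0" using ak by (rule Gamma_real_pos)
  show ?thesis unfolding e1 e2 using g k assms by (simp add: field_simps)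
qed

lemma cc_LIMSEQ:
  assumes "0 < a"
  shows "(\<lambda>n. cc a n k) \<longlonglongrightarrow> fact k / Gamma (a * real k + 1)"
proof (cases "k = 0")
  case True
  then show ?thesis by (simp add: cc_def dd_def)
next
  case False
  then have k: "k \<ge> 1" by simp
  have g1: "(\<lambda>n. Gamma_series (real k) (Suc n)) \<longlonglongrightarrow> Gamma (real k)"
    by (rule LIMSEQ_Suc[OF Gamma_series_LIMSEQ])
  have g2: "(\<lambda>n. Gamma_series (a * real k) (Suc n)) \<longlonglongrightarrow> Gamma (a * real k)"
    by (rule LIMSEQ_Suc[OF Gamma_series_LIMSEQ])
  have nz: "Gamma (a * real k) \<noteq> 0" using assms k by (intro less_imp_neq[symmetric] Gamma_real_pos) simp
  have "(\<lambda>n. Gamma_series (real k) (Suc n) / Gamma_series (a * real k) (Suc n) / a)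
        \<longlonglongrightarrow> Gamma (real k) / Gamma (a * real k) / a"
    using assms by (intro tendsto_divide g1 g2 tendsto_const nz) simp
  moreover have "Gamma_series (real k) (Suc n) / Gamma_series (a * real k) (Suc n) / a = cc a n k" for n
    using cc_Gamma_series[OF assms k, of n] assms by simp
  ultimately show ?thesis
    using Gamma_ratio_fact[OF assms k] by simp
qed

lemma ln_ratio_ge: "(m::real) > 0 \<Longrightarrow> ln ((m + 1) / m) \<ge> 1 / (m + 1)"
proof -
  assume m: "m > 0"
  have "ln (m / (m + 1)) \<le> m / (m + 1) - 1" using m by (intro ln_le_minus_one) simp
  also have "m / (m + 1) - 1 = - (1 / (m + 1))" using m by (simp add: field_simps)
  finally have "ln (m / (m + 1)) \<le> - (1 / (m + 1))" .
  moreover have "ln ((m + 1) / m) = - ln (m / (m + 1))" using m by (simp add: ln_div)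
  ultimately show ?thesis by simp
qed

lemma powr_ratio_ge:
  assumes m: "(m::real) > 0" and s: "s \<ge> 0"
  shows "(m + 1) powr s \<ge> m powr s * (1 + s / (m + 1))"
proof -
  have "((m + 1) / m) powr s = exp (s * ln ((m + 1) / m))" using m by (simp add: powr_def)
  also have "\<dots> \<ge> 1 + s * ln ((m + 1) / m)" by (rule exp_ge_add_one_self)
  finally have A: "((m + 1) / m) powr s \<ge> 1 + s * (1 / (m + 1))"
    using mult_left_mono[OF ln_ratio_ge[OF m] s] by linarith
  have "(m + 1) powr s = m powr s * ((m + 1) / m) powr s"
    using m by (simp add: powr_divide)
  also have "\<dots> \<ge> m powr s * (1 + s * (1 / (m + 1)))"
    using A by (intro mult_left_mono) auto
  finally show ?thesis by simp
qed

lemma cc_Suc_ge: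
  assumes "0 < a" "a \<le> 1"
  shows "cc a n k \<le> cc a (Suc n) k"
proof -
  define m where "m = real (Suc n)"
  define s where "s = (1 - a) * real k"
  define D where "D = dd a (Suc n) k"
  have m: "m > 0" by (simp add: m_def)
  have s: "s \<ge> 0" using assms by (simp add: s_def)
  have D: "D > 0" unfolding D_def using assms(1) by (rule dd_pos)
  have ms: "m powr s \<ge> 0" by simp
  have "cc a (Suc n) k = (m + 1) powr s * (D * (a + (1 - a) * ((m + 1) / (real k + (m + 1)))))"
    unfolding cc_def dd_Suc[of a "Suc n"] m_def s_def D_def by (simp add: add.commute)
  also have "(a + (1 - a) * ((m + 1) / (real k + (m + 1)))) = (a * real k + m + 1) / (real k + m + 1)"
    using m by (simp add: field_simps)
  finally have e: "cc a (Suc n) k = (m + 1) powr s * (D * ((a * real k + m + 1) / (real k + m + 1)))" .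
  have "m powr s * (real k + m + 1) \<le> m powr s * (1 + s / (m + 1)) * (a * real k + m + 1)"
  proof -
    have "(1 + s / (m + 1)) * (a * real k + m + 1) = (a * real k + m + 1) + s * ((a * real k + m + 1) / (m + 1))"
      using m by (simp add: field_simps)
    also have "\<dots> \<ge> (a * real k + m + 1) + s * 1"
      using s m assms by (intro add_left_mono mult_left_mono) (auto simp: field_simps)
    also have "(a * real k + m + 1) + s * 1 = real k + m + 1" by (simp add: s_def algebra_simps)
    finally show ?thesis using ms by (simp add: mult.assoc mult_left_mono)
  qed
  also have "\<dots> \<le> (m + 1) powr s * (a * real k + m + 1)"
    using powr_ratio_ge[OF m s] m assms by (intro mult_right_mono) auto
  finally have B: "m powr s * (real k + m + 1) \<le> (m + 1) powr s * (a * real k + m + 1)" .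
  have "cc a n k = m powr s * D" unfolding cc_def m_def s_def D_def by simp
  also have "\<dots> \<le> (m + 1) powr s * (D * ((a * real k + m + 1) / (real k + m + 1)))"
  proof -
    have pos: "real k + m + 1 > 0" using m by simp
    have "m powr s * D = (m powr s * (real k + m + 1)) * D / (real k + m + 1)" using pos by simp
    also have "\<dots> \<le> ((m + 1) powr s * (a * real k + m + 1)) * D / (real k + m + 1)"
      using B D pos by (intro divide_right_mono mult_right_mono) auto
    also have "\<dots> = (m + 1) powr s * (D * ((a * real k + m + 1) / (real k + m + 1)))" by simp
    finally show ?thesis .
  qed
  finally show ?thesis using e by simp
qed

lemma cc_le:
  assumes "0 < a" "a \<le> 1"
  shows "cc a n k \<le> fact k / Gamma (a * real k + 1)"
proof -
  have "incseq (\<lambda>n. cc a n k)" by (rule incseq_SucI) (rule cc_Suc_ge[OF assms])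
  then show ?thesis by (rule incseq_le[OF _ cc_LIMSEQ[OF assms(1)]])
qed

lemma cc_nonneg: "0 < a \<Longrightarrow> 0 \<le> cc a n k"
  unfolding cc_def using dd_pos[of a] by (simp add: less_imp_le)

lemma fact_dominates: "\<exists>N. \<forall>m\<ge>N. z * z ^ m \<le> fact m" if z: "(z::real) \<ge> 1"
proof -
  have "(\<lambda>m. inverse (fact m) * z ^ m) \<longlonglongrightarrow> 0"
    by (rule summable_LIMSEQ_zero[OF summable_exp])
  moreover have "1 / z > 0" using z by simp
  ultimately have "eventually (\<lambda>m. inverse (fact m) * z ^ m < 1 / z) sequentially"
    by (rule order_tendstoD(2))
  then obtain N where N: "\<And>m. m \<ge> N \<Longrightarrow> inverse (fact m) * z ^ m < 1 / z"
    by (auto simp: eventually_sequentially)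
  have "z * z ^ m \<le> fact m" if "m \<ge> N" for m
  proof -
    have "z ^ m / fact m < 1 / z" using N[OF that] by (simp add: divide_inverse mult.commute)
    then have "z ^ m < fact m / z" using z by (simp add: divide_less_eq field_simps)
    then show ?thesis using z by (simp add: field_simps)
  qed
  then show ?thesis by blast
qed

lemma Gamma_ge_fact:
  assumes "m \<ge> 1" "real m \<le> y"
  shows "fact m \<le> Gamma (y + 1)"
proof -
  have "Gamma (1 + real m) = (fact m :: real)" by (rule Gamma_fact)
  then have "fact m = Gamma (real m + 1)" by (simp add: add.commute)
  also have "\<dots> \<le> Gamma (y + 1)"
  proof (cases "real m = y")
    case True then show ?thesis by simp
  next
    case False
    then have "real m + 1 < y + 1" using assms by simp
    moreover have "real m + 1 \<ge> 3/2" using assms by simp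
    ultimately show ?thesis using Gamma_real_strict_mono by (simp add: less_imp_le)
  qed
  finally show ?thesis .
qed

lemma mlf_summable:
  assumes a: "0 < a" and x: "x \<ge> 0"
  shows "summable (\<lambda>k. x ^ k / Gamma (a * real k + 1))"
proof (rule summable_comparison_test_ev)
  show "summable (\<lambda>k. (1/2::real) ^ k)" by (rule summable_geometric) simp
  define Y where "Y = max 1 (2 * x)"
  define z where "z = Y powr (1 / a)"
  have Y: "Y \<ge> 1" by (simp add: Y_def)
  have z: "z \<ge> 1" unfolding z_def using Y a by (simp add: ge_one_powr_ge_zero)
  obtain N where N: "\<And>m. m \<ge> N \<Longrightarrow> z * z ^ m \<le> fact m" using fact_dominates[OF z] by blast
  define K where "K = nat \<lceil>(real N + 1) / a\<rceil>"
  show "eventually (\<lambda>k. norm (x ^ k / Gamma (a * real k + 1)) \<le> (1/2) ^ k) sequentially"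
    unfolding eventually_sequentially
  proof (intro exI allI impI)
    fix k assume k: "K \<le> k"
    define m where "m = nat \<lfloor>a * real k\<rfloor>"
    have "real k \<ge> (real N + 1) / a" using k unfolding K_def by linarith
    then have ak: "a * real k \<ge> real N + 1" using a by (simp add: field_simps)
    then have mN: "m \<ge> N + 1" unfolding m_def by linarith
    have m_le: "real m \<le> a * real k" unfolding m_def using ak by linarith
    have m_gt: "a * real k < real m + 1" unfolding m_def using ak by linarith
    have G: "Gamma (a * real k + 1) > 0" using a by (intro Gamma_real_pos add_nonneg_pos) auto
    have "(2 * x) ^ k \<le> Y ^ k" unfolding Y_def using x by (intro power_mono) auto
    also have "\<dots> = Y powr real k" using Y by (simp add: powr_realpow)
    also have "\<dots> \<le> Y powr ((real m + 1) / a)"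
      using Y m_gt a by (intro powr_mono) (auto simp: field_simps)
    also have "\<dots> = z powr (real m + 1)" unfolding z_def by (simp add: powr_powr)
    also have "\<dots> = z * z ^ m" using z by (simp add: powr_add powr_realpow)
    also have "\<dots> \<le> fact m" using N mN by simp
    also have "\<dots> \<le> Gamma (a * real k + 1)" using mN m_le by (intro Gamma_ge_fact) auto
    finally have B: "(2 * x) ^ k \<le> Gamma (a * real k + 1)" .
    have "norm (x ^ k / Gamma (a * real k + 1)) = x ^ k / Gamma (a * real k + 1)"
      using x G by simp
    also have "\<dots> \<le> (1/2) ^ k"
      using B G by (simp add: divide_le_eq power_mult_distrib power_divide field_simps)
    finally show "norm (x ^ k / Gamma (a * real k + 1)) \<le> (1/2) ^ k" .
  qed
qed


lemma gg_scaled: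
  assumes "0 < a"
  shows "gg a (Suc n) (real (Suc n) powr (1 - a) * x) = (\<Sum>k. (- x) ^ k * cc a n k / fact k)"
proof -
  have "(- (real (Suc n) powr (1 - a) * x)) ^ k = (- x) ^ k * real (Suc n) powr ((1 - a) * real k)" for k
  proof -
    have "(real (Suc n) powr (1 - a)) ^ k = (real (Suc n) powr (1 - a)) powr real k"
      by (simp add: powr_realpow)
    also have "\<dots> = real (Suc n) powr ((1 - a) * real k)" by (simp add: powr_powr)
    finally have "(real (Suc n) powr (1 - a)) ^ k = real (Suc n) powr ((1 - a) * real k)" .
    moreover have "(- (real (Suc n) powr (1 - a) * x)) ^ k = (real (Suc n) powr (1 - a)) ^ k * (- x) ^ k"
      by (metis mult_minus_right power_mult_distrib)
    ultimately show ?thesis by simp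
  qed
  then show ?thesis unfolding gg_def cc_def by (simp add: mult.assoc)
qed

lemma mlf_lim:
  assumes a: "0 < a" "a \<le> 1" and x: "x \<ge> 0"
  shows "(\<lambda>n. gg a (Suc n) (real (Suc n) powr (1 - a) * x)) \<longlonglongrightarrow> mittag_leffler a 1 (- x)"
proof -
  have "(\<lambda>n. \<Sum>k. (- x) ^ k * cc a n k / fact k) \<longlonglongrightarrow> (\<Sum>k. (- x) ^ k / Gamma (a * real k + 1))"
  proof (rule tannerys_theorem[THEN conjunct2, THEN conjunct2])
    fix k
    have "(\<lambda>n. (- x) ^ k * cc a n k / fact k) \<longlonglongrightarrow> (- x) ^ k * (fact k / Gamma (a * real k + 1)) / fact k"
      by (intro tendsto_divide tendsto_mult_left cc_LIMSEQ a tendsto_const) simp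
    then show "(\<lambda>n. (- x) ^ k * cc a n k / fact k) \<longlonglongrightarrow> (- x) ^ k / Gamma (a * real k + 1)"
      by simp
  next
    show "summable (\<lambda>k. x ^ k / Gamma (a * real k + 1))" by (rule mlf_summable[OF a(1) x])
  next
    show "eventually (\<lambda>(k, n). norm ((- x) ^ k * cc a n k / fact k) \<le> x ^ k / Gamma (a * real k + 1))
          (at_top \<times>\<^sub>F sequentially)"
    proof (rule always_eventually, clarify)
      fix k n
      have "norm ((- x) ^ k * cc a n k / fact k) = x ^ k * cc a n k / fact k"
        using x cc_nonneg[OF a(1)] by (simp add: abs_mult power_abs)
      also have "\<dots> \<le> x ^ k * (fact k / Gamma (a * real k + 1)) / fact k"
        using x cc_le[OF a] by (intro divide_right_mono mult_left_mono) auto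
      also have "\<dots> = x ^ k / Gamma (a * real k + 1)" by simp
      finally show "norm ((- x) ^ k * cc a n k / fact k) \<le> x ^ k / Gamma (a * real k + 1)" .
    qed
  qed simp
  then show ?thesis unfolding gg_scaled[OF a(1)] mittag_leffler_def by simp
qed

lemma mlf_nonneg:
  assumes a: "0 < a" "a \<le> 1" and x: "x \<ge> 0"
  shows "0 \<le> mittag_leffler a 1 (- x)"
proof (rule LIMSEQ_le_const[OF mlf_lim[OF a x]])
  show "\<exists>N. \<forall>n\<ge>N. 0 \<le> gg a (Suc n) (real (Suc n) powr (1 - a) * x)"
    using gg_prop[OF a] x by auto
qed

lemma mlf_antimono:
  assumes a: "0 < a" "a \<le> 1" and x: "0 \<le> x1" "x1 \<le> x2"
  shows "mittag_leffler a 1 (- x2) \<le> mittag_leffler a 1 (- x1)"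
proof (rule LIMSEQ_le[OF mlf_lim[OF a] mlf_lim[OF a]])
  show "\<exists>N. \<forall>n\<ge>N. gg a (Suc n) (real (Suc n) powr (1 - a) * x2) \<le> gg a (Suc n) (real (Suc n) powr (1 - a) * x1)"
    using gg_prop[OF a] x by (auto intro!: mult_left_mono)
qed (use x in auto)



lemma powr_mul_self: "(x::real) > 0 \<Longrightarrow> x powr r * x = x powr (r + 1)"
  by (simp add: powr_add)

lemma Phi_mul_self:
  assumes "p > 0"
  shows "Phi_p p A * A = \<bar>A\<bar> powr p"
proof (cases "A = 0")
  case True then show ?thesis by (simp add: Phi_p_def)
next
  case False
  have "Phi_p p A * A = \<bar>A\<bar> powr (p - 2) * (A * A)" by (simp add: Phi_p_def)
  also have "\<dots> = (\<bar>A\<bar> powr (p - 2) * \<bar>A\<bar>) * \<bar>A\<bar>" by (simp add: abs_mult_self_eq mult.assoc flip: abs_mult)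
  also have "\<dots> = \<bar>A\<bar> powr p" using False by (simp add: powr_mul_self)
  finally show ?thesis .
qed

lemma Phi_young:
  fixes A B p :: real
  assumes p: "p > 1"
  shows "B * Phi_p p A \<le> \<bar>B\<bar> powr p / p + (p - 1) / p * \<bar>A\<bar> powr p"
proof (cases "A = 0")
  case True
  then show ?thesis using p by (simp add: Phi_p_def)
next
  case False
  define q where "q = p / (p - 1)"
  have q: "q > 1" "1 / p + 1 / q = 1" using p by (auto simp: q_def field_simps)
  have "B * Phi_p p A \<le> \<bar>B * Phi_p p A\<bar>" by simp
  also have "\<bar>B * Phi_p p A\<bar> = \<bar>B\<bar> * (\<bar>A\<bar> powr (p - 2) * \<bar>A\<bar>)"
    by (simp add: Phi_p_def abs_mult)
  also have "\<bar>A\<bar> powr (p - 2) * \<bar>A\<bar> = \<bar>A\<bar> powr (p - 1)"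
    using False by (simp add: powr_mul_self)
  also have "\<bar>B\<bar> * \<bar>A\<bar> powr (p - 1) \<le> \<bar>B\<bar> powr p / p + (\<bar>A\<bar> powr (p - 1)) powr q / q"
    using p q by (intro Youngs_inequality) auto
  also have "(\<bar>A\<bar> powr (p - 1)) powr q = \<bar>A\<bar> powr p"
    using p by (simp add: powr_powr q_def)
  also have "\<bar>A\<bar> powr p / q = (p - 1) / p * \<bar>A\<bar> powr p" by (simp add: q_def)
  finally show ?thesis .
qed

lemma H_min:
  fixes A B p :: real
  assumes p: "p > 1"
  shows "(p - 1) / p * (Phi_p p B * B) - B * Phi_p p B \<le> (p - 1) / p * (Phi_p p A * A) - B * Phi_p p A"
proof -
  have e1: "Phi_p p B * B = \<bar>B\<bar> powr p" "Phi_p p A * A = \<bar>A\<bar> powr p" using p by (auto intro: Phi_mul_self)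
  have e2: "B * Phi_p p B = \<bar>B\<bar> powr p" using e1(1) by (simp add: mult.commute)
  have "(p - 1) / p * \<bar>B\<bar> powr p - \<bar>B\<bar> powr p = - (\<bar>B\<bar> powr p / p)" using p by (simp add: field_simps)
  then show ?thesis using Phi_young[OF p, of B A] unfolding e1 e2 by linarith
qed


lemma intble_cmul_real: "f integrable_on S \<Longrightarrow> (\<lambda>x. (c::real) * f x) integrable_on S"
  for f :: "real \<Rightarrow> real"
  using integrable_cmul[of f S c] by simp

lemma integral_cmul_real: "integral S (\<lambda>x. (c::real) * f x) = c * integral S f"
  for f :: "real \<Rightarrow> real"
  using integral_cmul[of S c f] by simp

theorem lemma3:
  fixes T a p :: real and \<phi> :: "real \<Rightarrow> real" and t :: real
  assumes "T > 0" and "0 < a" and "a < 1" and "2 \<le> p"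
    and "continuous_on {0..T} \<phi>" and "bounded (\<phi> ` {0..T})"
    and "in_H1 T (\<lambda>s. Phi_p p (\<phi> s))"
    and "in_H1 T (\<lambda>s. Phi_p p (\<phi> s) * \<phi> s)"
    and "t \<in> {0<..<T}"
  shows "ABC_deriv T a (\<lambda>s. Phi_p p (\<phi> s)) t * \<phi> t
         \<ge> (p - 1) / p * ABC_deriv T a (\<lambda>s. Phi_p p (\<phi> s) * \<phi> s) t"
proof -
  have a0: "0 < a" and a1: "a \<le> 1" using assms by auto
  have p1: "p > 1" using assms by simp
  have t0: "0 < t" and tT: "t < T" using assms by auto
  define g where "g = (SOME g. H1_deriv T (\<lambda>s. Phi_p p (\<phi> s)) g)"
  define h where "h = (SOME g. H1_deriv T (\<lambda>s. Phi_p p (\<phi> s) * \<phi> s) g)"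
  have Hg: "H1_deriv T (\<lambda>s. Phi_p p (\<phi> s)) g"
    unfolding g_def using assms(7) unfolding in_H1_def by (rule someI_ex)
  have Hh: "H1_deriv T (\<lambda>s. Phi_p p (\<phi> s) * \<phi> s) h"
    unfolding h_def using assms(8) unfolding in_H1_def by (rule someI_ex)
  define W where "W y = mittag_leffler a 1 (- gamma_par a * (t - y) powr a)" for y
  define c0 where "c0 = B_norm a / (1 - a)"
  have ABC1: "ABC_deriv T a (\<lambda>s. Phi_p p (\<phi> s)) t = c0 * integral {0..t} (\<lambda>y. g y * W y)"
    unfolding ABC_deriv_def g_def W_def c0_def Let_def by simp
  have ABC2: "ABC_deriv T a (\<lambda>s. Phi_p p (\<phi> s) * \<phi> s) t = c0 * integral {0..t} (\<lambda>y. h y * W y)"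
    unfolding ABC_deriv_def h_def W_def c0_def Let_def by simp
  have c0: "c0 > 0"
  proof -
    have "Gamma a > 0" using a0 by simp
    then have "B_norm a > 0" unfolding B_norm_def using assms by (simp add: add_pos_nonneg)
    then show ?thesis unfolding c0_def using assms by simp
  qed
  have gam: "gamma_par a > 0" unfolding gamma_par_def using assms by simp
  have Wmono: "W x \<le> W y" if "0 \<le> x" "x \<le> y" "y \<le> t" for x y
  proof -
    have "(t - y) powr a \<le> (t - x) powr a" using that a0 by (intro powr_mono2) auto
    then have L: "gamma_par a * (t - y) powr a \<le> gamma_par a * (t - x) powr a"
      using gam by (intro mult_left_mono) auto
    have "0 \<le> gamma_par a * (t - y) powr a" using gam by simp
    from this L have "mittag_leffler a 1 (- (gamma_par a * (t - x) powr a)) \<le> mittag_leffler a 1 (- (gamma_par a * (t - y) powr a))"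
      by (rule mlf_antimono[OF a0 a1])
    then show ?thesis unfolding W_def by simp
  qed
  have W0: "W 0 \<ge> 0"
  proof -
    have "0 \<le> mittag_leffler a 1 (- (gamma_par a * (t - 0) powr a))"
      using gam by (intro mlf_nonneg[OF a0 a1]) simp
    then show ?thesis unfolding W_def by simp
  qed
  have sub: "{0..t} \<subseteq> {0..T}" using tT by auto
  have gi: "g integrable_on {0..t}"
  proof -
    have "g absolutely_integrable_on {0..T}" using Hg unfolding H1_deriv_def by blast
    then have "g integrable_on {0..T}" using set_lebesgue_integral_eq_integral(1) by blast
    then show ?thesis by (rule integrable_on_subinterval[OF _ sub])
  qed
  have hi: "h integrable_on {0..t}"
  proof -
    have "h absolutely_integrable_on {0..T}" using Hh unfolding H1_deriv_def by blast
    then have "h integrable_on {0..T}" using set_lebesgue_integral_eq_integral(1) by blast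
    then show ?thesis by (rule integrable_on_subinterval[OF _ sub])
  qed
  define k where "k y = (p - 1) / p * h y - \<phi> t * g y" for y
  have ki: "k integrable_on {0..t}" unfolding k_def[abs_def] using gi hi by (intro integrable_diff intble_cmul_real)
  obtain c where c: "c \<in> {0..t}"
    and cI: "((\<lambda>x. W x * k x) has_integral (W 0 * integral {0..c} k + W t * integral {c..t} k)) {0..t}"
    using second_mean_value_theorem_full[OF ki, of W] t0 Wmono by auto
  have Wgi: "(\<lambda>x. W x * g x) integrable_on {0..t}"
  proof (rule second_mean_value_theorem_full[OF gi, of W])
    show "0 \<le> t" using t0 by simp
    show "W x \<le> W y" if "0 \<le> x" "x \<le> y" "y \<le> t" for x y using Wmono that by blast
  qed (auto simp: integrable_on_def)
  have Whi: "(\<lambda>x. W x * h x) integrable_on {0..t}"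
  proof (rule second_mean_value_theorem_full[OF hi, of W])
    show "0 \<le> t" using t0 by simp
    show "W x \<le> W y" if "0 \<le> x" "x \<le> y" "y \<le> t" for x y using Wmono that by blast
  qed (auto simp: integrable_on_def)
  define u where "u s = Phi_p p (\<phi> s)" for s
  define v where "v s = Phi_p p (\<phi> s) * \<phi> s" for s
  define H where "H y = (p - 1) / p * v y - \<phi> t * u y" for y
  have intk: "integral {0..y} k = H y - H 0" if "y \<in> {0..t}" for y
  proof -
    have yT: "y \<in> {0..T}" using that tT by auto
    have sy: "{0..y} \<subseteq> {0..t}" using that by auto
    have gy: "g integrable_on {0..y}" by (rule integrable_on_subinterval[OF gi sy])
    have hy: "h integrable_on {0..y}" by (rule integrable_on_subinterval[OF hi sy])
    have "integral {0..y} k = (p - 1) / p * integral {0..y} h - \<phi> t * integral {0..y} g"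
      unfolding k_def[abs_def] using gy hy
      by (simp only: integral_diff intble_cmul_real integral_cmul_real)
    also have "integral {0..y} h = v y - v 0"
    proof -
      have "Phi_p p (\<phi> y) * \<phi> y = Phi_p p (\<phi> 0) * \<phi> 0 + integral {0..y} h"
        using Hh yT unfolding H1_deriv_def by blast
      then show ?thesis unfolding v_def by linarith
    qed
    also have "integral {0..y} g = u y - u 0"
    proof -
      have "Phi_p p (\<phi> y) = Phi_p p (\<phi> 0) + integral {0..y} g"
        using Hg yT unfolding H1_deriv_def by blast
      then show ?thesis unfolding u_def by linarith
    qed
    finally have "integral {0..y} k = (p - 1) / p * (v y - v 0) - \<phi> t * (u y - u 0)" .
    then show ?thesis unfolding H_def right_diff_distrib by linarith
  qed
  have int_ct: "integral {c..t} k = H t - H c"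
  proof -
    have "integral {0..c} k + integral {c..t} k = integral {0..t} k"
      using c by (intro Henstock_Kurzweil_Integration.integral_combine ki) auto
    then show ?thesis using intk[OF c] intk[of t] t0 by simp
  qed
  have Hmin: "H t \<le> H y" for y
    unfolding H_def u_def v_def using H_min[OF p1, of "\<phi> t" "\<phi> y"] by simp
  have Wt: "W 0 \<le> W t" using Wmono[of 0 t] t0 by simp
  have "integral {0..t} (\<lambda>x. W x * k x) = W 0 * (H c - H 0) + W t * (H t - H c)"
    using integral_unique[OF cI] intk[OF c] int_ct by simp
  also have "\<dots> = W 0 * (H t - H 0) + (W t - W 0) * (H t - H c)" by (simp add: algebra_simps)
  also have "\<dots> \<le> 0"
  proof -
    have "W 0 * (H t - H 0) \<le> 0" using W0 Hmin[of 0] by (simp add: mult_nonneg_nonpos)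
    moreover have "(W t - W 0) * (H t - H c) \<le> 0" using Wt Hmin[of c] by (simp add: mult_nonneg_nonpos)
    ultimately show ?thesis by simp
  qed
  finally have I: "integral {0..t} (\<lambda>x. W x * k x) \<le> 0" .
  have "integral {0..t} (\<lambda>x. W x * k x) = (p - 1) / p * integral {0..t} (\<lambda>y. h y * W y) - \<phi> t * integral {0..t} (\<lambda>y. g y * W y)"
  proof -
    have "integral {0..t} (\<lambda>x. W x * k x) = integral {0..t} (\<lambda>x. (p - 1) / p * (W x * h x) - \<phi> t * (W x * g x))"
      unfolding k_def by (simp add: algebra_simps)
    also have "\<dots> = (p - 1) / p * integral {0..t} (\<lambda>x. W x * h x) - \<phi> t * integral {0..t} (\<lambda>x. W x * g x)"
      using Wgi Whi by (simp only: integral_diff intble_cmul_real integral_cmul_real)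
    finally show ?thesis by (simp add: mult.commute)
  qed
  with I have "\<phi> t * integral {0..t} (\<lambda>y. g y * W y) \<ge> (p - 1) / p * integral {0..t} (\<lambda>y. h y * W y)" by simp
  then have "c0 * (\<phi> t * integral {0..t} (\<lambda>y. g y * W y)) \<ge> c0 * ((p - 1) / p * integral {0..t} (\<lambda>y. h y * W y))"
    using c0 by (intro mult_left_mono) auto
  then show ?thesis unfolding ABC1 ABC2 by (simp add: algebra_simps)
qed

end
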